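(* Let $\mathbb{K}$ be an infinite field, let $P,Q\in\mathbb{K}[x_1,\dots,x_n]$, let $X$ be a nonsingular irreducible affine variety over $\mathbb{K}$, and let $\pi=(\pi_1,\dots,\pi_n):X\to\mathbb{K}^n$ be a regular mapping such that $Q\circ\pi$ is not identically zero and $\frac{P\circ\pi}{Q\circ\pi}\in\mathcal{P}(X)_{x_0}$ for some point $x_0\in X$. Let $\varphi=(\varphi_1,\dots,\varphi_n):(X,x_0)\to\mathbb{K}^n$ be a germ of a regular mapping such that for each $1\le i\le n$, $$\varphi_i-\pi_i\in(Q\circ\pi)\,\mathfrak{m}_{x_0}\quad\text{in the ring }\mathcal{P}(X)_{x_0},$$ where $\mathfrak{m}_{x_0}$ is the maximal ideal of $\mathcal{P}(X)_{x_0}$. Then $Q\circ\varphi$ is not identically zero and the rational function $\frac{P\circ\varphi}{Q\circ\varphi}$ is regular at $x_0$, i.e. belongs to $\mathcal{P}(X)_{x_0}$.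
   Context: $\mathcal{P}(X)$ is the coordinate ring of the affine variety $X$ and $\mathcal{P}(X)_{x_0}$ its localisation at the maximal ideal of $x_0$ (the ring of germs of regular functions at $x_0$). A rational function is regular at $x_0$ if it lies in $\mathcal{P}(X)_{x_0}$ inside the field of fractions. *)

theory Defs
  imports Main "HOL-Library.Poly_Mapping"
begin

text \<open>A polynomial in the variables x_0, x_1, ... is a finitely supported map from
 monomials (finitely supported exponent vectors nat =>0 nat) to coefficients.\<close>

type_synonym 'k mpoly = "(nat \<Rightarrow>\<^sub>0 nat) \<Rightarrow>\<^sub>0 'k"

definition mpvars :: "'k::zero mpoly \<Rightarrow> nat set" where
  "mpvars p = (\<Union>mon\<in>Poly_Mapping.keys p. Poly_Mapping.keys (mon :: nat \<Rightarrow>\<^sub>0 nat))"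

text \<open>Polynomials in the n variables x_0,...,x_(n-1) (the paper's x_1..x_n).\<close>
definition polys :: "nat \<Rightarrow> 'k::zero mpoly set" where
  "polys n = {p. mpvars p \<subseteq> {..<n}}"

definition mpeval :: "'k::comm_ring_1 mpoly \<Rightarrow> (nat \<Rightarrow> 'k) \<Rightarrow> 'k" where
  "mpeval p x = (\<Sum>mon\<in>Poly_Mapping.keys p. Poly_Mapping.lookup p mon * (\<Prod>i\<in>Poly_Mapping.keys mon. x i ^ Poly_Mapping.lookup mon i))"

definition mpderiv_at :: "'k::comm_ring_1 mpoly \<Rightarrow> nat \<Rightarrow> (nat \<Rightarrow> 'k) \<Rightarrow> 'k" where
  "mpderiv_at p j x = (\<Sum>mon\<in>Poly_Mapping.keys p. Poly_Mapping.lookup p mon * of_nat (Poly_Mapping.lookup mon j)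
       * x j ^ (Poly_Mapping.lookup mon j - 1) * (\<Prod>i\<in>Poly_Mapping.keys mon - {j}. x i ^ Poly_Mapping.lookup mon i))"

text \<open>K^m is represented by the functions nat => K vanishing from index m on.\<close>
definition kspace :: "nat \<Rightarrow> (nat \<Rightarrow> 'k::zero) set" where
  "kspace m = {x. \<forall>j\<ge>m. x j = 0}"

definition zero_set :: "nat \<Rightarrow> 'k::comm_ring_1 mpoly set \<Rightarrow> (nat \<Rightarrow> 'k) set" where
  "zero_set m F = {x \<in> kspace m. \<forall>f\<in>F. mpeval f x = 0}"

definition affine_variety :: "nat \<Rightarrow> (nat \<Rightarrow> 'k::comm_ring_1) set \<Rightarrow> bool" where
  "affine_variety m X \<longleftrightarrow> (\<exists>F \<subseteq> polys m. X = zero_set m F)"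

definition irreducible_variety :: "nat \<Rightarrow> (nat \<Rightarrow> 'k::comm_ring_1) set \<Rightarrow> bool" where
  "irreducible_variety m X \<longleftrightarrow> affine_variety m X \<and> X \<noteq> {} \<and>
     (\<forall>Y Z. affine_variety m Y \<longrightarrow> affine_variety m Z \<longrightarrow> X \<subseteq> Y \<union> Z \<longrightarrow> X \<subseteq> Y \<or> X \<subseteq> Z)"

definition vanishing_ideal :: "nat \<Rightarrow> (nat \<Rightarrow> 'k::comm_ring_1) set \<Rightarrow> 'k mpoly set" where
  "vanishing_ideal m X = {p \<in> polys m. \<forall>x\<in>X. mpeval p x = 0}"

definition is_ideal_in :: "nat \<Rightarrow> 'k::comm_ring_1 mpoly set \<Rightarrow> bool" where
  "is_ideal_in m I \<longleftrightarrow> I \<subseteq> polys m \<and> 0 \<in> I \<and> (\<forall>a\<in>I. \<forall>b\<in>I. a + b \<in> I) \<and>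
     (\<forall>a\<in>I. \<forall>r\<in>polys m. r * a \<in> I)"

definition is_prime_in :: "nat \<Rightarrow> 'k::comm_ring_1 mpoly set \<Rightarrow> bool" where
  "is_prime_in m I \<longleftrightarrow> is_ideal_in m I \<and> 1 \<notin> I \<and>
     (\<forall>a\<in>polys m. \<forall>b\<in>polys m. a * b \<in> I \<longrightarrow> a \<in> I \<or> b \<in> I)"

text \<open>There is a chain of prime ideals p_0 < p_1 < ... < p_d of P(X), i.e. of prime ideals
 of the polynomial ring containing I(X).\<close>
definition has_prime_chain :: "nat \<Rightarrow> (nat \<Rightarrow> 'k::comm_ring_1) set \<Rightarrow> nat \<Rightarrow> bool" where
  "has_prime_chain m X d \<longleftrightarrow> (\<exists>C :: nat \<Rightarrow> 'k mpoly set.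
     (\<forall>i\<le>d. is_prime_in m (C i) \<and> vanishing_ideal m X \<subseteq> C i) \<and>
     (\<forall>i<d. C i \<subset> C (Suc i)))"

definition variety_dim :: "nat \<Rightarrow> (nat \<Rightarrow> 'k::comm_ring_1) set \<Rightarrow> nat \<Rightarrow> bool" where
  "variety_dim m X d \<longleftrightarrow> has_prime_chain m X d \<and> \<not> has_prime_chain m X (Suc d)"

definition lin_indep_vecs :: "nat \<Rightarrow> (nat \<Rightarrow> 'k::field) list \<Rightarrow> bool" where
  "lin_indep_vecs m vs \<longleftrightarrow> (\<forall>c :: nat \<Rightarrow> 'k.
     (\<forall>j<m. (\<Sum>l<length vs. c l * (vs ! l) j) = 0) \<longrightarrow> (\<forall>l<length vs. c l = 0))"

definition rank_ge :: "nat \<Rightarrow> (nat \<Rightarrow> 'k::field) set \<Rightarrow> nat \<Rightarrow> bool" where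
  "rank_ge m S r \<longleftrightarrow> (\<exists>vs. set vs \<subseteq> S \<and> length vs = r \<and> lin_indep_vecs m vs)"

definition gradient_at :: "nat \<Rightarrow> 'k::comm_ring_1 mpoly \<Rightarrow> (nat \<Rightarrow> 'k) \<Rightarrow> (nat \<Rightarrow> 'k)" where
  "gradient_at m p x = (\<lambda>j. if j < m then mpderiv_at p j x else 0)"

definition nonsingular_point :: "nat \<Rightarrow> (nat \<Rightarrow> 'k::field) set \<Rightarrow> (nat \<Rightarrow> 'k) \<Rightarrow> bool" where
  "nonsingular_point m X x \<longleftrightarrow> (\<exists>d r. variety_dim m X d \<and>
     rank_ge m ((\<lambda>f. gradient_at m f x) ` vanishing_ideal m X) r \<and>
     \<not> rank_ge m ((\<lambda>f. gradient_at m f x) ` vanishing_ideal m X) (Suc r) \<and> r = m - d)"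

definition nonsingular_variety :: "nat \<Rightarrow> (nat \<Rightarrow> 'k::field) set \<Rightarrow> bool" where
  "nonsingular_variety m X \<longleftrightarrow> affine_variety m X \<and> (\<forall>x\<in>X. nonsingular_point m X x)"

definition vec_of :: "nat \<Rightarrow> (nat \<Rightarrow> 'k::zero) \<Rightarrow> (nat \<Rightarrow> 'k)" where
  "vec_of n v = (\<lambda>i. if i < n then v i else 0)"

end

theory Submission
  imports Defs
begin

definition Mon :: "(nat \<Rightarrow>\<^sub>0 nat) \<Rightarrow> (nat \<Rightarrow> 'k::comm_ring_1) \<Rightarrow> 'k" where
  "Mon mon x = (\<Prod>i\<in>Poly_Mapping.keys mon. x i ^ Poly_Mapping.lookup mon i)"

lemma mpeval_Mon: "mpeval p x = (\<Sum>mon\<in>Poly_Mapping.keys p. Poly_Mapping.lookup p mon * Mon mon x)"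
  by (simp add: mpeval_def Mon_def)

lemma mpeval_alt:
  assumes "finite S" "Poly_Mapping.keys p \<subseteq> S"
  shows "mpeval p x = (\<Sum>mon\<in>S. Poly_Mapping.lookup p mon * Mon mon x)"
  unfolding mpeval_Mon
  by (rule sum.mono_neutral_left) (use assms in \<open>auto simp: in_keys_iff\<close>)

lemma mpeval_add: "mpeval (p + q) x = mpeval p x + mpeval q x"
proof -
  let ?S = "Poly_Mapping.keys p \<union> Poly_Mapping.keys q"
  have "mpeval (p + q) x = (\<Sum>mon\<in>?S. Poly_Mapping.lookup (p+q) mon * Mon mon x)"
    by (rule mpeval_alt) (auto simp: keys_add)
  also have "\<dots> = (\<Sum>mon\<in>?S. Poly_Mapping.lookup p mon * Mon mon x) + (\<Sum>mon\<in>?S. Poly_Mapping.lookup q mon * Mon mon x)"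
    by (simp add: lookup_add distrib_right sum.distrib)
  also have "\<dots> = mpeval p x + mpeval q x"
    by (subst (1 2) mpeval_alt[of ?S]) auto
  finally show ?thesis .
qed

lemma mpeval_zero[simp]: "mpeval 0 x = 0"
  by (simp add: mpeval_def)

lemma mpeval_sum: "mpeval (\<Sum>i\<in>I. f i) x = (\<Sum>i\<in>I. mpeval (f i) x)"
  by (induction I rule: infinite_finite_induct) (auto simp: mpeval_add)

lemma mpeval_single: "mpeval (Poly_Mapping.single k c) x = c * Mon k x"
  by (cases "c = 0") (auto simp: mpeval_Mon)

lemma Mon_alt:
  assumes "finite S" "Poly_Mapping.keys k \<subseteq> S"
  shows "Mon k x = (\<Prod>i\<in>S. x i ^ Poly_Mapping.lookup k i)"
  unfolding Mon_def
  by (rule prod.mono_neutral_left) (use assms in \<open>auto simp: in_keys_iff\<close>)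

lemma Mon_add: "Mon (k + l) x = Mon k x * Mon l x"
proof -
  let ?S = "Poly_Mapping.keys k \<union> Poly_Mapping.keys l"
  have "Mon (k + l) x = (\<Prod>i\<in>?S. x i ^ Poly_Mapping.lookup (k+l) i)"
    by (rule Mon_alt) (auto simp: keys_add)
  also have "\<dots> = (\<Prod>i\<in>?S. x i ^ Poly_Mapping.lookup k i) * (\<Prod>i\<in>?S. x i ^ Poly_Mapping.lookup l i)"
    by (simp add: lookup_add power_add prod.distrib)
  also have "\<dots> = Mon k x * Mon l x"
    by (subst (1 2) Mon_alt[of ?S]) auto
  finally show ?thesis .
qed

lemma pm_sum_single: "p = (\<Sum>k\<in>Poly_Mapping.keys p. Poly_Mapping.single k (Poly_Mapping.lookup p k))"
proof (rule poly_mapping_eqI)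
  fix k'
  show "Poly_Mapping.lookup p k' = Poly_Mapping.lookup (\<Sum>k\<in>Poly_Mapping.keys p. Poly_Mapping.single k (Poly_Mapping.lookup p k)) k'"
    by (cases "k' \<in> Poly_Mapping.keys p")
       (auto simp: lookup_sum lookup_single when_def in_keys_iff)
qed

lemma mpeval_mult: "mpeval (p * q) x = mpeval p x * mpeval q x"
proof -
  have "p * q = (\<Sum>k\<in>Poly_Mapping.keys p. Poly_Mapping.single k (Poly_Mapping.lookup p k)) *
                (\<Sum>l\<in>Poly_Mapping.keys q. Poly_Mapping.single l (Poly_Mapping.lookup q l))"
    by (subst (1) pm_sum_single, subst (1) pm_sum_single[of q]) simp
  also have "\<dots> = (\<Sum>k\<in>Poly_Mapping.keys p. \<Sum>l\<in>Poly_Mapping.keys q.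
        Poly_Mapping.single (k + l) (Poly_Mapping.lookup p k * Poly_Mapping.lookup q l))"
    by (simp add: sum_product mult_single)
  finally have "mpeval (p * q) x = (\<Sum>k\<in>Poly_Mapping.keys p. \<Sum>l\<in>Poly_Mapping.keys q.
        (Poly_Mapping.lookup p k * Mon k x) * (Poly_Mapping.lookup q l * Mon l x))"
    by (simp add: mpeval_sum mpeval_single Mon_add mult_ac)
  also have "\<dots> = mpeval p x * mpeval q x"
    by (simp add: mpeval_Mon sum_product)
  finally show ?thesis .
qed

lemma mpeval_const: "mpeval (Poly_Mapping.single 0 c) x = c"
  by (simp add: mpeval_single Mon_def)

lemma mpvars_add: "mpvars (p + q) \<subseteq> mpvars p \<union> mpvars q"
proof
  fix i assume "i \<in> mpvars (p + q)"
  then obtain mon where mon: "mon \<in> Poly_Mapping.keys (p + q)" and i: "i \<in> Poly_Mapping.keys mon"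
    unfolding mpvars_def by blast
  from mon keys_add[of p q] have "mon \<in> Poly_Mapping.keys p \<or> mon \<in> Poly_Mapping.keys q" by blast
  with i show "i \<in> mpvars p \<union> mpvars q" unfolding mpvars_def by blast
qed

lemma polys_add: "p \<in> polys m \<Longrightarrow> q \<in> polys m \<Longrightarrow> p + q \<in> polys m"
  using mpvars_add[of p q] unfolding polys_def by blast

lemma polys_const: "Poly_Mapping.single 0 c \<in> polys m"
  unfolding polys_def mpvars_def by auto

lemma mpvars_mult: "mpvars (p * q) \<subseteq> mpvars p \<union> mpvars q"
proof
  fix i assume "i \<in> mpvars (p * q)"
  then obtain mon where mon: "mon \<in> Poly_Mapping.keys (p * q)" and i: "i \<in> Poly_Mapping.keys mon"
    unfolding mpvars_def by blast
  from mon keys_mult obtain k l where "mon = k + l" "k \<in> Poly_Mapping.keys p" "l \<in> Poly_Mapping.keys q"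
    by blast
  with i keys_add[of k l] show "i \<in> mpvars p \<union> mpvars q" unfolding mpvars_def by blast
qed

lemma polys_mult: "p \<in> polys m \<Longrightarrow> q \<in> polys m \<Longrightarrow> p * q \<in> polys m"
  using mpvars_mult[of p q] unfolding polys_def by blast


definition Rz :: "nat \<Rightarrow> (nat \<Rightarrow> 'k::comm_ring_1) set \<Rightarrow> ((nat \<Rightarrow> 'k) \<Rightarrow> 'k) \<Rightarrow> bool" where
  "Rz m X f \<longleftrightarrow> (\<exists>p\<in>polys m. \<forall>x\<in>X. mpeval p x = f x)"

lemma Rz_poly: "p \<in> polys m \<Longrightarrow> Rz m X (\<lambda>x. mpeval p x)"
  unfolding Rz_def by blast

lemma Rz_const: "Rz m X (\<lambda>_. c)"
  unfolding Rz_def using polys_const mpeval_const by blast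

lemma Rz_add: "Rz m X f \<Longrightarrow> Rz m X g \<Longrightarrow> Rz m X (\<lambda>x. f x + g x)"
  unfolding Rz_def by (metis polys_add mpeval_add)

lemma Rz_mult: "Rz m X f \<Longrightarrow> Rz m X g \<Longrightarrow> Rz m X (\<lambda>x. f x * g x)"
  unfolding Rz_def by (metis polys_mult mpeval_mult)

definition LR :: "nat \<Rightarrow> (nat \<Rightarrow> 'k::comm_ring_1) set \<Rightarrow> (nat \<Rightarrow> 'k) \<Rightarrow> ((nat \<Rightarrow> 'k) \<Rightarrow> 'k) \<Rightarrow> bool" where
  "LR m X x0 g \<longleftrightarrow> (\<exists>p s. Rz m X p \<and> Rz m X s \<and> s x0 \<noteq> 0 \<and> (\<forall>x\<in>X. s x \<noteq> 0 \<longrightarrow> g x * s x = p x))"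

definition SM :: "nat \<Rightarrow> (nat \<Rightarrow> 'k::comm_ring_1) set \<Rightarrow> (nat \<Rightarrow> 'k) \<Rightarrow> ((nat \<Rightarrow> 'k) \<Rightarrow> 'k) \<Rightarrow> ((nat \<Rightarrow> 'k) \<Rightarrow> 'k) \<Rightarrow> bool" where
  "SM m X x0 q g \<longleftrightarrow> (\<exists>p s. Rz m X p \<and> Rz m X s \<and> s x0 \<noteq> 0 \<and> p x0 = 0 \<and>
       (\<forall>x\<in>X. s x \<noteq> 0 \<longrightarrow> g x * s x = q x * p x))"

lemma LR_const: "LR m X x0 (\<lambda>_. c :: 'k::idom)"
  unfolding LR_def
  by (rule exI[of _ "\<lambda>_. c"], rule exI[of _ "\<lambda>_. 1"]) (auto simp: Rz_const)

lemma LR_add: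
  assumes "LR m X x0 f" "LR m X x0 (g :: _ \<Rightarrow> 'k::idom)"
  shows "LR m X x0 (\<lambda>x. f x + g x)"
proof -
  from assms obtain p s p' s' where A: "Rz m X p" "Rz m X s" "s x0 \<noteq> 0" "\<forall>x\<in>X. s x \<noteq> 0 \<longrightarrow> f x * s x = p x"
    "Rz m X p'" "Rz m X s'" "s' x0 \<noteq> 0" "\<forall>x\<in>X. s' x \<noteq> 0 \<longrightarrow> g x * s' x = p' x"
    unfolding LR_def by blast
  show ?thesis unfolding LR_def
  proof (rule exI[of _ "\<lambda>x. p x * s' x + p' x * s x"], rule exI[of _ "\<lambda>x. s x * s' x"], intro conjI ballI impI)
    fix x assume "x \<in> X" "s x * s' x \<noteq> 0"
    with A have e: "f x * s x = p x" "g x * s' x = p' x" by auto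
    have "(f x + g x) * (s x * s' x) = (f x * s x) * s' x + (g x * s' x) * s x"
      by (simp add: algebra_simps)
    then show "(f x + g x) * (s x * s' x) = p x * s' x + p' x * s x"
      by (simp only: e)
  qed (use A in \<open>auto intro: Rz_add Rz_mult\<close>)
qed

lemma LR_mult:
  assumes "LR m X x0 f" "LR m X x0 (g :: _ \<Rightarrow> 'k::idom)"
  shows "LR m X x0 (\<lambda>x. f x * g x)"
proof -
  from assms obtain p s p' s' where A: "Rz m X p" "Rz m X s" "s x0 \<noteq> 0" "\<forall>x\<in>X. s x \<noteq> 0 \<longrightarrow> f x * s x = p x"
    "Rz m X p'" "Rz m X s'" "s' x0 \<noteq> 0" "\<forall>x\<in>X. s' x \<noteq> 0 \<longrightarrow> g x * s' x = p' x"
    unfolding LR_def by blast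
  show ?thesis unfolding LR_def
  proof (rule exI[of _ "\<lambda>x. p x * p' x"], rule exI[of _ "\<lambda>x. s x * s' x"], intro conjI ballI impI)
    fix x assume "x \<in> X" "s x * s' x \<noteq> 0"
    with A have e: "f x * s x = p x" "g x * s' x = p' x" by auto
    have "(f x * g x) * (s x * s' x) = (f x * s x) * (g x * s' x)"
      by (simp add: algebra_simps)
    then show "(f x * g x) * (s x * s' x) = p x * p' x"
      by (simp only: e)
  qed (use A in \<open>auto intro: Rz_add Rz_mult\<close>)
qed

lemma SM_add:
  assumes "SM m X x0 q f" "SM m X x0 q (g :: _ \<Rightarrow> 'k::idom)"
  shows "SM m X x0 q (\<lambda>x. f x + g x)"
proof -
  from assms obtain p s p' s' where A: "Rz m X p" "Rz m X s" "s x0 \<noteq> 0" "p x0 = 0" "\<forall>x\<in>X. s x \<noteq> 0 \<longrightarrow> f x * s x = q x * p x"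
    "Rz m X p'" "Rz m X s'" "s' x0 \<noteq> 0" "p' x0 = 0" "\<forall>x\<in>X. s' x \<noteq> 0 \<longrightarrow> g x * s' x = q x * p' x"
    unfolding SM_def by blast
  have H: "\<forall>x\<in>X. s x * s' x \<noteq> 0 \<longrightarrow> (f x + g x) * (s x * s' x) = q x * (p x * s' x + p' x * s x)"
  proof (intro ballI impI)
    fix x assume "x \<in> X" "s x * s' x \<noteq> 0"
    with A have "f x * s x = q x * p x" "g x * s' x = q x * p' x" by auto
    then show "(f x + g x) * (s x * s' x) = q x * (p x * s' x + p' x * s x)"
      by algebra
  qed
  show ?thesis unfolding SM_def
    by (rule exI[of _ "\<lambda>x. p x * s' x + p' x * s x"], rule exI[of _ "\<lambda>x. s x * s' x"], intro conjI)
       (use A H in \<open>auto intro: Rz_add Rz_mult\<close>)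
qed

lemma SM_mult:
  assumes "LR m X x0 f" "SM m X x0 q (g :: _ \<Rightarrow> 'k::idom)"
  shows "SM m X x0 q (\<lambda>x. f x * g x)"
proof -
  from assms obtain p s p' s' where A: "Rz m X p" "Rz m X s" "s x0 \<noteq> 0" "\<forall>x\<in>X. s x \<noteq> 0 \<longrightarrow> f x * s x = p x"
    "Rz m X p'" "Rz m X s'" "s' x0 \<noteq> 0" "p' x0 = 0" "\<forall>x\<in>X. s' x \<noteq> 0 \<longrightarrow> g x * s' x = q x * p' x"
    unfolding SM_def LR_def by blast
  have H: "\<forall>x\<in>X. s x * s' x \<noteq> 0 \<longrightarrow> (f x * g x) * (s x * s' x) = q x * (p x * p' x)"
  proof (intro ballI impI)
    fix x assume "x \<in> X" "s x * s' x \<noteq> 0"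
    with A have e: "f x * s x = p x" "g x * s' x = q x * p' x" by auto
    have "(f x * g x) * (s x * s' x) = (f x * s x) * (g x * s' x)"
      by (simp add: algebra_simps)
    then show "(f x * g x) * (s x * s' x) = q x * (p x * p' x)"
      by (simp add: e algebra_simps)
  qed
  show ?thesis unfolding SM_def
    by (rule exI[of _ "\<lambda>x. p x * p' x"], rule exI[of _ "\<lambda>x. s x * s' x"], intro conjI)
       (use A H in \<open>auto intro: Rz_add Rz_mult\<close>)
qed

definition Cg where "Cg m X x0 q y z \<longleftrightarrow> LR m X x0 y \<and> LR m X x0 z \<and> SM m X x0 q (\<lambda>x. y x - z x)"

lemma Cg_const: "Cg m X x0 q (\<lambda>_. c :: 'k::idom) (\<lambda>_. c)"
  unfolding Cg_def SM_def
  by (intro conjI LR_const, rule exI[of _ "\<lambda>_. 0"], rule exI[of _ "\<lambda>_. 1"]) (auto intro: Rz_const)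

lemma Cg_add:
  assumes "Cg m X x0 q f f'" "Cg m X x0 q g (g' :: _ \<Rightarrow> 'k::idom)"
  shows "Cg m X x0 q (\<lambda>x. f x + g x) (\<lambda>x. f' x + g' x)"
proof -
  have e: "(\<lambda>x. (f x + g x) - (f' x + g' x)) = (\<lambda>x. (f x - f' x) + (g x - g' x))"
    by (simp add: algebra_simps)
  show ?thesis using assms unfolding Cg_def e by (auto intro: LR_add SM_add)
qed

lemma Cg_mult:
  assumes "Cg m X x0 q f f'" "Cg m X x0 q g (g' :: _ \<Rightarrow> 'k::idom)"
  shows "Cg m X x0 q (\<lambda>x. f x * g x) (\<lambda>x. f' x * g' x)"
proof -
  have e: "(\<lambda>x. (f x * g x) - (f' x * g' x)) = (\<lambda>x. f x * (g x - g' x) + g' x * (f x - f' x))"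
    by (simp add: algebra_simps)
  show ?thesis using assms unfolding Cg_def e by (auto intro: LR_mult SM_add SM_mult)
qed

lemma comp_sum:
  assumes const: "\<And>c. C (\<lambda>_. c) (\<lambda>_. c)"
    and add: "\<And>f g f' g'. C f f' \<Longrightarrow> C g g' \<Longrightarrow> C (\<lambda>x. f x + g x) (\<lambda>x. f' x + g' x)"
  shows "finite A \<Longrightarrow> (\<forall>a\<in>A. C (F a) (G a)) \<Longrightarrow> C (\<lambda>x. \<Sum>a\<in>A. F a x) (\<lambda>x. \<Sum>a\<in>A. G a x)"
proof (induction A rule: finite_induct)
  case empty then show ?case using const by simp
next
  case (insert a A) then show ?case using add[of "F a" "G a"] by simp
qed

lemma comp_prod:
  assumes const: "\<And>c. C (\<lambda>_. c) (\<lambda>_. c)"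
    and mult: "\<And>f g f' g'. C f f' \<Longrightarrow> C g g' \<Longrightarrow> C (\<lambda>x. f x * g x) (\<lambda>x. f' x * g' x)"
  shows "finite A \<Longrightarrow> (\<forall>a\<in>A. C (F a) (G a)) \<Longrightarrow> C (\<lambda>x. \<Prod>a\<in>A. F a x) (\<lambda>x. \<Prod>a\<in>A. G a x)"
proof (induction A rule: finite_induct)
  case empty then show ?case using const by simp
next
  case (insert a A) then show ?case using mult[of "F a" "G a"] by simp
qed

lemma comp_pow:
  assumes const: "\<And>c. C (\<lambda>_. c) (\<lambda>_. c)"
    and mult: "\<And>f g f' g'. C f f' \<Longrightarrow> C g g' \<Longrightarrow> C (\<lambda>x. f x * g x) (\<lambda>x. f' x * g' x)"
    and "C f g"
  shows "C (\<lambda>x. f x ^ k) (\<lambda>x. g x ^ k)"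
proof (induction k)
  case 0 then show ?case using const by simp
next
  case (Suc k) then show ?case using mult[OF \<open>C f g\<close> Suc] by simp
qed

lemma comp_mpeval:
  fixes C :: "((nat \<Rightarrow> 'a) \<Rightarrow> 'k::comm_ring_1) \<Rightarrow> ((nat \<Rightarrow> 'a) \<Rightarrow> 'k) \<Rightarrow> bool"
  assumes const: "\<And>c. C (\<lambda>_. c) (\<lambda>_. c)"
    and add: "\<And>f g f' g'. C f f' \<Longrightarrow> C g g' \<Longrightarrow> C (\<lambda>x. f x + g x) (\<lambda>x. f' x + g' x)"
    and mult: "\<And>f g f' g'. C f f' \<Longrightarrow> C g g' \<Longrightarrow> C (\<lambda>x. f x * g x) (\<lambda>x. f' x * g' x)"
    and Q: "Q \<in> polys n" and fi: "\<forall>i<n. C (f i) (g i)"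
  shows "C (\<lambda>x. mpeval Q (vec_of n (\<lambda>i. f i x))) (\<lambda>x. mpeval Q (vec_of n (\<lambda>i. g i x)))"
proof -
  have keys: "\<And>mon i. mon \<in> Poly_Mapping.keys Q \<Longrightarrow> i \<in> Poly_Mapping.keys mon \<Longrightarrow> i < n"
    using Q unfolding polys_def mpvars_def by blast
  have e: "(\<lambda>x. mpeval Q (vec_of n (\<lambda>i. h i x))) = (\<lambda>x. \<Sum>mon\<in>Poly_Mapping.keys Q. Poly_Mapping.lookup Q mon *
        (\<Prod>i\<in>Poly_Mapping.keys mon. h i x ^ Poly_Mapping.lookup mon i))" for h :: "nat \<Rightarrow> (nat \<Rightarrow> 'a) \<Rightarrow> 'k"
    unfolding mpeval_def
    by (intro ext sum.cong refl arg_cong2[where f="(*)"] prod.cong) (auto simp: vec_of_def keys)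
  have "C (\<lambda>x. \<Sum>mon\<in>Poly_Mapping.keys Q. Poly_Mapping.lookup Q mon *
        (\<Prod>i\<in>Poly_Mapping.keys mon. f i x ^ Poly_Mapping.lookup mon i))
     (\<lambda>x. \<Sum>mon\<in>Poly_Mapping.keys Q. Poly_Mapping.lookup Q mon *
        (\<Prod>i\<in>Poly_Mapping.keys mon. g i x ^ Poly_Mapping.lookup mon i))"
  proof (rule comp_sum[where C=C, OF const add finite_keys])
    show "\<forall>mon\<in>Poly_Mapping.keys Q. C (\<lambda>x. Poly_Mapping.lookup Q mon *
        (\<Prod>i\<in>Poly_Mapping.keys mon. f i x ^ Poly_Mapping.lookup mon i))
     (\<lambda>x. Poly_Mapping.lookup Q mon *
        (\<Prod>i\<in>Poly_Mapping.keys mon. g i x ^ Poly_Mapping.lookup mon i))"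
    proof
      fix mon assume mon: "mon \<in> Poly_Mapping.keys Q"
      have "C (\<lambda>x. \<Prod>i\<in>Poly_Mapping.keys mon. f i x ^ Poly_Mapping.lookup mon i)
              (\<lambda>x. \<Prod>i\<in>Poly_Mapping.keys mon. g i x ^ Poly_Mapping.lookup mon i)"
        by (rule comp_prod[where C=C, OF const mult])
           (use fi keys mon in \<open>auto intro: comp_pow[where C=C, OF const mult]\<close>)
      then show "C (\<lambda>x. Poly_Mapping.lookup Q mon *
        (\<Prod>i\<in>Poly_Mapping.keys mon. f i x ^ Poly_Mapping.lookup mon i))
     (\<lambda>x. Poly_Mapping.lookup Q mon *
        (\<Prod>i\<in>Poly_Mapping.keys mon. g i x ^ Poly_Mapping.lookup mon i))"
        by (rule mult[OF const])
    qed
  qed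
  then show ?thesis unfolding e .
qed

theorem lemma2p4:
  fixes m n :: nat
    and X :: "(nat \<Rightarrow> 'k::field) set"
    and x0 :: "nat \<Rightarrow> 'k"
    and P Q :: "'k mpoly"
    and pi a b :: "nat \<Rightarrow> 'k mpoly"
  assumes infinite_field: "infinite (UNIV :: 'k set)"
    and PQ: "P \<in> polys n" "Q \<in> polys n"
    and X_irr: "irreducible_variety m X"
    and X_nonsing: "nonsingular_variety m X"
    and x0: "x0 \<in> X"
    and pi_reg: "\<forall>i<n. pi i \<in> polys m"
    and Qpi_nonzero: "\<exists>x\<in>X. mpeval Q (vec_of n (\<lambda>i. mpeval (pi i) x)) \<noteq> 0"
    and PQpi_regular: "\<exists>r\<in>polys m. \<exists>s\<in>polys m. mpeval s x0 \<noteq> 0 \<and>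
          (\<forall>x\<in>X. mpeval P (vec_of n (\<lambda>i. mpeval (pi i) x)) * mpeval s x
                 = mpeval r x * mpeval Q (vec_of n (\<lambda>i. mpeval (pi i) x)))"
    and phi_germ: "\<forall>i<n. a i \<in> polys m \<and> b i \<in> polys m \<and> mpeval (b i) x0 \<noteq> 0"
    and phi_close: "\<forall>i<n. \<exists>c\<in>polys m. \<exists>d\<in>polys m. mpeval d x0 \<noteq> 0 \<and> mpeval c x0 = 0 \<and>
          (\<forall>x\<in>X. (mpeval (a i) x - mpeval (pi i) x * mpeval (b i) x) * mpeval d x
                 = mpeval (b i) x * mpeval Q (vec_of n (\<lambda>i. mpeval (pi i) x)) * mpeval c x)"
  shows "(\<exists>x\<in>X. (\<forall>i<n. mpeval (b i) x \<noteq> 0) \<and>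
            mpeval Q (vec_of n (\<lambda>i. mpeval (a i) x / mpeval (b i) x)) \<noteq> 0) \<and>
         (\<exists>r\<in>polys m. \<exists>s\<in>polys m. mpeval s x0 \<noteq> 0 \<and>
            (\<forall>x\<in>X. (\<forall>i<n. mpeval (b i) x \<noteq> 0) \<longrightarrow>
               mpeval P (vec_of n (\<lambda>i. mpeval (a i) x / mpeval (b i) x)) * mpeval s x
               = mpeval r x * mpeval Q (vec_of n (\<lambda>i. mpeval (a i) x / mpeval (b i) x))))"
proof -
  define q where "q = (\<lambda>x. mpeval Q (vec_of n (\<lambda>i. mpeval (pi i) x)))"
  define ph where "ph = (\<lambda>i x. mpeval (a i) x / mpeval (b i) x)"
  define pp where "pp = (\<lambda>i x. mpeval (pi i) x)"
  obtain r0 s0 where r0: "r0 \<in> polys m" and s0: "s0 \<in> polys m" "mpeval s0 x0 \<noteq> 0"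
    and rs0: "\<forall>x\<in>X. mpeval P (vec_of n (\<lambda>i. mpeval (pi i) x)) * mpeval s0 x
                 = mpeval r0 x * mpeval Q (vec_of n (\<lambda>i. mpeval (pi i) x))"
    using PQpi_regular by blast
  have Rzq: "Rz m X q" unfolding q_def
    by (rule comp_mpeval[where C="\<lambda>f g. Rz m X f" and g="\<lambda>i x. mpeval (pi i) x", OF Rz_const Rz_add Rz_mult PQ(2)])
       (use pi_reg in \<open>auto intro: Rz_poly\<close>)
  have Cgi: "\<forall>i<n. Cg m X x0 q (ph i) (pp i)"
  proof (intro allI impI)
    fix i assume i: "i < n"
    from phi_germ i have ab: "a i \<in> polys m" "b i \<in> polys m" "mpeval (b i) x0 \<noteq> 0" by auto
    from phi_close i obtain c d where c: "c \<in> polys m" and d: "d \<in> polys m" "mpeval d x0 \<noteq> 0" "mpeval c x0 = 0"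
      and cd: "\<forall>x\<in>X. (mpeval (a i) x - mpeval (pi i) x * mpeval (b i) x) * mpeval d x
                 = mpeval (b i) x * mpeval Q (vec_of n (\<lambda>i. mpeval (pi i) x)) * mpeval c x" by blast
    have "LR m X x0 (ph i)" unfolding LR_def ph_def
      by (rule exI[of _ "mpeval (a i)"], rule exI[of _ "mpeval (b i)"])
         (use ab in \<open>auto intro: Rz_poly\<close>)
    moreover have "LR m X x0 (pp i)" unfolding LR_def pp_def
      by (rule exI[of _ "mpeval (pi i)"], rule exI[of _ "\<lambda>_. 1"])
         (use pi_reg i in \<open>auto intro: Rz_poly Rz_const\<close>)
    moreover have "SM m X x0 q (\<lambda>x. ph i x - pp i x)" unfolding SM_def
    proof (rule exI[of _ "\<lambda>x. mpeval (b i) x * mpeval c x"], rule exI[of _ "\<lambda>x. mpeval (b i) x * mpeval d x"],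
        intro conjI ballI impI)
      fix x assume x: "x \<in> X" and nz: "mpeval (b i) x * mpeval d x \<noteq> 0"
      then have bx: "mpeval (b i) x \<noteq> 0" by auto
      have "(ph i x - pp i x) * (mpeval (b i) x * mpeval d x) =
            (mpeval (a i) x - mpeval (pi i) x * mpeval (b i) x) * mpeval d x"
        unfolding ph_def pp_def using bx by (simp add: field_simps)
      also have "\<dots> = q x * (mpeval (b i) x * mpeval c x)"
        using cd x unfolding q_def by (simp add: ac_simps)
      finally show "(ph i x - pp i x) * (mpeval (b i) x * mpeval d x) = q x * (mpeval (b i) x * mpeval c x)" .
    qed (use ab c d in \<open>auto intro: Rz_poly Rz_mult\<close>)
    ultimately show "Cg m X x0 q (ph i) (pp i)" unfolding Cg_def by blast
  qed
  have CQ: "Cg m X x0 q (\<lambda>x. mpeval Q (vec_of n (\<lambda>i. ph i x))) (\<lambda>x. mpeval Q (vec_of n (\<lambda>i. pp i x)))"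
    by (rule comp_mpeval[where C="Cg m X x0 q", OF Cg_const Cg_add Cg_mult PQ(2) Cgi])
  have CP: "Cg m X x0 q (\<lambda>x. mpeval P (vec_of n (\<lambda>i. ph i x))) (\<lambda>x. mpeval P (vec_of n (\<lambda>i. pp i x)))"
    by (rule comp_mpeval[where C="Cg m X x0 q", OF Cg_const Cg_add Cg_mult PQ(1) Cgi])
  define Qp where "Qp = (\<lambda>x. mpeval Q (vec_of n (\<lambda>i. ph i x)))"
  define Pp where "Pp = (\<lambda>x. mpeval P (vec_of n (\<lambda>i. ph i x)))"
  define Pq where "Pq = (\<lambda>x. mpeval P (vec_of n (\<lambda>i. pp i x)))"
  have qpp: "q = (\<lambda>x. mpeval Q (vec_of n (\<lambda>i. pp i x)))" unfolding q_def pp_def ..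
  from CQ obtain p1 s1 where p1: "Rz m X p1" "Rz m X s1" "s1 x0 \<noteq> 0" "p1 x0 = 0"
    and e1: "\<forall>x\<in>X. s1 x \<noteq> 0 \<longrightarrow> (Qp x - q x) * s1 x = q x * p1 x"
    unfolding Cg_def SM_def Qp_def qpp by blast
  from CP obtain p2 s2 where p2: "Rz m X p2" "Rz m X s2" "s2 x0 \<noteq> 0" "p2 x0 = 0"
    and e2: "\<forall>x\<in>X. s2 x \<noteq> 0 \<longrightarrow> (Pp x - Pq x) * s2 x = q x * p2 x"
    unfolding Cg_def SM_def Pp_def Pq_def by blast
  have e0: "\<forall>x\<in>X. Pq x * mpeval s0 x = mpeval r0 x * q x"
    using rs0 unfolding Pq_def pp_def q_def by simp
  have part1: "\<exists>x\<in>X. (\<forall>i<n. mpeval (b i) x \<noteq> 0) \<and> Qp x \<noteq> 0"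
  proof (rule ccontr)
    assume neg: "\<not> ?thesis"
    define W where "W = (\<lambda>x. s1 x * (s1 x + p1 x) * (\<Prod>i<n. mpeval (b i) x))"
    have "Rz m X (\<lambda>x. \<Prod>i<n. mpeval (b i) x)"
      by (rule comp_prod[where C="\<lambda>f g. Rz m X f" and G="\<lambda>i x. mpeval (b i) x", OF Rz_const Rz_mult])
         (use phi_germ in \<open>auto intro: Rz_poly\<close>)
    then have "Rz m X W" unfolding W_def using p1 by (intro Rz_mult Rz_add) auto
    then obtain w where w: "w \<in> polys m" "\<forall>x\<in>X. mpeval w x = W x" unfolding Rz_def by blast
    from Rzq obtain qq where qq: "qq \<in> polys m" "\<forall>x\<in>X. mpeval qq x = q x" unfolding Rz_def by blast
    from X_irr obtain F where F: "F \<subseteq> polys m" "X = zero_set m F"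
      unfolding irreducible_variety_def affine_variety_def by blast
    have Xk: "X \<subseteq> kspace m" using F(2) unfolding zero_set_def by blast
    define Y where "Y = zero_set m {w}"
    define Z where "Z = zero_set m {qq}"
    have aY: "affine_variety m Y" unfolding affine_variety_def Y_def using w(1) by blast
    have aZ: "affine_variety m Z" unfolding affine_variety_def Z_def using qq(1) by blast
    have "X \<subseteq> Y \<union> Z"
    proof
      fix x assume x: "x \<in> X"
      show "x \<in> Y \<union> Z"
      proof (cases "W x = 0 \<or> q x = 0")
        case True
        then show ?thesis using x Xk w qq unfolding Y_def Z_def zero_set_def by auto
      next
        case False
        then have s1x: "s1 x \<noteq> 0" and Ux: "s1 x + p1 x \<noteq> 0" and bx: "\<forall>i<n. mpeval (b i) x \<noteq> 0"
          and qx: "q x \<noteq> 0"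
          unfolding W_def by auto
        have "Qp x * s1 x = q x * (s1 x + p1 x)" using e1 x s1x by (simp add: algebra_simps)
        then have "Qp x \<noteq> 0" using qx Ux by auto
        with bx x neg show ?thesis by blast
      qed
    qed
    with X_irr aY aZ have "X \<subseteq> Y \<or> X \<subseteq> Z" unfolding irreducible_variety_def by blast
    then show False
    proof
      assume "X \<subseteq> Y"
      with x0 have "W x0 = 0" using w unfolding Y_def zero_set_def by auto
      then show False unfolding W_def using p1 phi_germ by auto
    next
      assume "X \<subseteq> Z"
      then have "\<forall>x\<in>X. q x = 0" using qq unfolding Z_def zero_set_def by auto
      then show False using Qpi_nonzero unfolding q_def by blast
    qed
  qed
  define U where "U = (\<lambda>x. s1 x + p1 x)"
  define S where "S = (\<lambda>x. s1 x * s2 x * s2 x * mpeval s0 x * U x)"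
  define RR where "RR = (\<lambda>x. s1 x * s2 x * s1 x * (mpeval r0 x * s2 x + p2 x * mpeval s0 x))"
  have "Rz m X S" unfolding S_def U_def using p1 p2 s0 by (intro Rz_mult Rz_add Rz_poly) auto
  then obtain S' where S': "S' \<in> polys m" "\<forall>x\<in>X. mpeval S' x = S x" unfolding Rz_def by blast
  have "Rz m X RR" unfolding RR_def using p1 p2 s0 r0 by (intro Rz_mult Rz_add Rz_poly) auto
  then obtain R' where R': "R' \<in> polys m" "\<forall>x\<in>X. mpeval R' x = RR x" unfolding Rz_def by blast
  have S'x0: "mpeval S' x0 \<noteq> 0" using S' x0 p1 p2 s0 unfolding S_def U_def by auto
  have main: "\<forall>x\<in>X. Pp x * S x = RR x * Qp x"
  proof
    fix x assume x: "x \<in> X"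
    show "Pp x * S x = RR x * Qp x"
    proof (cases "s1 x = 0 \<or> s2 x = 0")
      case True then show ?thesis unfolding S_def RR_def by auto
    next
      case False
      then have h1: "(Qp x - q x) * s1 x = q x * p1 x" and h2: "(Pp x - Pq x) * s2 x = q x * p2 x"
        using e1 e2 x by auto
      have h0: "Pq x * mpeval s0 x = mpeval r0 x * q x" using e0 x by auto
      show ?thesis unfolding S_def RR_def U_def using h0 h1 h2 by algebra
    qed
  qed
  have part2: "\<exists>r\<in>polys m. \<exists>s\<in>polys m. mpeval s x0 \<noteq> 0 \<and>
            (\<forall>x\<in>X. (\<forall>i<n. mpeval (b i) x \<noteq> 0) \<longrightarrow> Pp x * mpeval s x = mpeval r x * Qp x)"
    using S' R' S'x0 main by (intro bexI[of _ R'] bexI[of _ S']) auto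
  show ?thesis using part1 part2 unfolding Pp_def Qp_def ph_def by simp
qed

end
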